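(* Let $T\in\mathcal{T}_{\mathrm{hom}}$ and let $\varphi$ be a continuous $p,q$-invariant graph of $T$ with jumping number $l=m+np$ ($0\le m\le p-1$, $0\le n\le q-1$). Then $m$ and $p$ are relatively prime; equivalently, $l$ and $p$ are relatively prime.
   Context: $\mathbb{T}^1=\mathbb{R}/\mathbb{Z}$, $\mathbb{T}^2=\mathbb{T}^1\times\mathbb{T}^1$, $m$ Lebesgue measure on $\mathbb{T}^1$, $\omega\in[0,1)$ irrational, $\pi:\mathbb{R}^2\to\mathbb{T}^2$ the natural projection. $\mathbb{T}^n_*$ is the set of $n$-tuples of pairwise distinct points of $\mathbb{T}^1$. $\mathcal{T}_{\mathrm{hom}}$: continuous maps $T(\theta,x)=(\theta+\omega,T_\theta(x))$ on $\mathbb{T}^2$, homotopic to the identity, with orientation-preserving homeomorphic fibre maps. A lift of $T$ to $\mathbb{R}^2$ is a continuous $\hat T:\mathbb{R}^2\to\mathbb{R}^2$ with $\pi\circ\hat T=T\circ\pi$. $p,q$-invariant graph: a measurable $\varphi:\mathbb{T}^1\to\mathbb{T}^{pq}_*$, $\theta\mapsto(\varphi^i_j(\theta))_{1\le i\le p,1\le j\le q}$, with point set $\Phi$ satisfying $T_\theta(\Phi_\theta)=\Phi_{\theta+\omega}$ for a.e. $\theta$, which (i) has no measurable $T$-invariant subset with strictly between $0$ and $pq$ points on a.e. fibre, (ii) is the disjoint union of $q$-valued graphs $\Phi^i=\{(\theta,\varphi^i_j(\theta)):j\}$, $i=1,\dots,p$, cyclically permuted by $T$ with period $p$, and (iii)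 no $\Phi^i$ has a measurable subset with strictly between $0$ and $q$ points on a.e. fibre that is invariant under some $T^r$, $r\ge1$. It is continuous if $\varphi$ is continuous as a map into $\mathbb{T}^{pq}_*$; then each $\Phi^i$ is (the point set of) a $q$-curve, i.e. it is $\{(\hat\theta\bmod1,\hat\psi(\hat\theta)\bmod1):\hat\theta\in\mathbb{R}\}$ for a continuous $\hat\psi:\mathbb{R}\to\mathbb{R}$ with $\hat\psi(\hat\theta+q)-\hat\psi(\hat\theta)\in\mathbb{Z}$ constant and $\hat\psi(\hat\theta+l)-\hat\psi(\hat\theta)\notin\mathbb{Z}$ for $1\le l<q$ (such $\hat\psi$ are the lifts of $\Phi^i$, uniquely determined by their value at $0$). Jumping number: label the lifts $\hat x^i_j\in[0,1)$ of the points of $\Phi_0$, where $\hat x^i_1,\dots,\hat x^i_q$ lift the points of $\Phi^i_0$, so that $\hat x^1_1<\hat x^2_1<\dots<\hat x^p_1<\hat x^1_2<\dots<\hat x^p_2<\dots<\hat x^p_q$ (such a labelling exists). Let $\hat\varphi^i_j$ be the lift of $\Phi^i$ with $\hat\varphi^i_j(0)=\hat x^i_j$. There are unique $0\le m\le p-1$, $0\le n\le q-1$ and a lift $\hat T$ of $T$ with $\hat T(\hat\theta,\hat\varphi^1_1(\hat\theta))=(\hat\theta+\omega,\hat\varphi^{1+m}_{1+n}(\hat\theta+\omega))$ for all $\hat\theta\in\mathbb{R}$; then $l:=m+np$ is the jumping number of $\varphi$ with respect to $T$. *)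

theory Defs
  imports "HOL-Analysis.Analysis"
begin

text \<open>A point of T^1 = R/Z is represented by its unique representative
in [0,1); the projection R -> T^1 is frac. Points of T^2 are pairs in [0,1)^2 and
the projection pi : R^2 -> T^2 is tproj. Indices i, j of the paper (1-based) are
0-based here.\<close>

definition tproj :: "real \<times> real \<Rightarrow> real \<times> real" where
  "tproj z = (frac (fst z), frac (snd z))"

text \<open>A map T in T_hom is given by a continuous lift F of its fibre maps:
T(theta,x) = (theta + omega, F theta x) mod 1. F theta is the lift of an
orientation preserving circle homeomorphism (strictly increasing, degree one), and
F is 1-periodic in theta (this is homotopy to the identity).\<close>

definition T_hom_lift :: "(real \<Rightarrow> real \<Rightarrow> real) \<Rightarrow> bool" where
  "T_hom_lift F \<longleftrightarrow>
     continuous_on UNIV (\<lambda>z. F (fst z) (snd z)) \<and>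
     (\<forall>\<theta> x. F (\<theta> + 1) x = F \<theta> x) \<and>
     (\<forall>\<theta> x. F \<theta> (x + 1) = F \<theta> x + 1) \<and>
     (\<forall>\<theta>. strict_mono (F \<theta>))"

definition Tmap :: "real \<Rightarrow> (real \<Rightarrow> real \<Rightarrow> real) \<Rightarrow> real \<times> real \<Rightarrow> real \<times> real" where
  "Tmap \<omega> F z = (frac (fst z + \<omega>), frac (F (fst z) (snd z)))"

definition is_T_lift :: "real \<Rightarrow> (real \<Rightarrow> real \<Rightarrow> real) \<Rightarrow> (real \<times> real \<Rightarrow> real \<times> real) \<Rightarrow> bool" where
  "is_T_lift \<omega> F G \<longleftrightarrow> continuous_on UNIV G \<and> (\<forall>z. tproj (G z) = Tmap \<omega> F (tproj z))"

definition fibre :: "(real \<times> real) set \<Rightarrow> real \<Rightarrow> real set" where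
  "fibre A \<theta> = {x. (\<theta>, x) \<in> A}"

definition qcurve_lift :: "nat \<Rightarrow> (real \<times> real) set \<Rightarrow> (real \<Rightarrow> real) \<Rightarrow> bool" where
  "qcurve_lift q S \<psi> \<longleftrightarrow>
     continuous_on UNIV \<psi> \<and>
     (\<exists>k::int. \<forall>\<theta>. \<psi> (\<theta> + real q) - \<psi> \<theta> = of_int k) \<and>
     (\<forall>l. 1 \<le> l \<and> l < q \<longrightarrow> (\<forall>\<theta>. \<psi> (\<theta> + real l) - \<psi> \<theta> \<notin> \<int>)) \<and>
     S = {(frac \<theta>, frac (\<psi> \<theta>)) | \<theta>. True}"

definition qcurve :: "nat \<Rightarrow> (real \<times> real) set \<Rightarrow> bool" where
  "qcurve q S \<longleftrightarrow> (\<exists>\<psi>. qcurve_lift q S \<psi>)"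

definition fibre_invariant :: "real \<Rightarrow> (real \<Rightarrow> real \<Rightarrow> real) \<Rightarrow> nat \<Rightarrow> (real \<times> real) set \<Rightarrow> bool" where
  "fibre_invariant \<omega> F r A \<longleftrightarrow>
     (AE \<theta> in lborel. \<theta> \<in> {0..<1} \<longrightarrow>
        (\<lambda>x. snd ((Tmap \<omega> F ^^ r) (\<theta>, x))) ` fibre A \<theta> = fibre A (frac (\<theta> + real r * \<omega>)))"

text \<open>Continuous p,q-invariant graph, given by its decomposition into the point sets
Phi 0, ..., Phi (p-1) of the q-valued graphs Phi^1, ..., Phi^p.\<close>
definition cont_pq_invariant_graph ::
  "real \<Rightarrow> (real \<Rightarrow> real \<Rightarrow> real) \<Rightarrow> nat \<Rightarrow> nat \<Rightarrow> (nat \<Rightarrow> (real \<times> real) set) \<Rightarrow> bool" where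
  "cont_pq_invariant_graph \<omega> F p q Phi \<longleftrightarrow>
     1 \<le> p \<and> 1 \<le> q \<and>
     (\<forall>i<p. qcurve q (Phi i)) \<and>
     (\<forall>i<p. \<forall>i'<p. i \<noteq> i' \<longrightarrow> Phi i \<inter> Phi i' = {}) \<and>
     (\<forall>\<theta>\<in>{0..<1}. card (fibre (\<Union>i<p. Phi i) \<theta>) = p * q) \<and>
     fibre_invariant \<omega> F 1 (\<Union>i<p. Phi i) \<and>
     \<comment> \<open>(i)\<close>
     \<not> (\<exists>A. A \<subseteq> (\<Union>i<p. Phi i) \<and> A \<in> sets (borel :: (real \<times> real) measure) \<and>
           fibre_invariant \<omega> F 1 A \<and>
           (AE \<theta> in lborel. \<theta> \<in> {0..<1} \<longrightarrow>
              0 < card (fibre A \<theta>) \<and> card (fibre A \<theta>) < p * q)) \<and>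
     \<comment> \<open>(ii)\<close>
     (\<exists>\<sigma>. bij_betw \<sigma> {..<p} {..<p} \<and>
        (\<forall>i<p. AE \<theta> in lborel. \<theta> \<in> {0..<1} \<longrightarrow>
            (\<lambda>x. snd (Tmap \<omega> F (\<theta>, x))) ` fibre (Phi i) \<theta> = fibre (Phi (\<sigma> i)) (frac (\<theta> + \<omega>))) \<and>
        (\<forall>i<p. {(\<sigma> ^^ k) i | k. k < p} = {..<p})) \<and>
     \<comment> \<open>(iii)\<close>
     (\<forall>i<p. \<not> (\<exists>A r. 1 \<le> r \<and> A \<subseteq> Phi i \<and> A \<in> sets (borel :: (real \<times> real) measure) \<and>
           fibre_invariant \<omega> F r A \<and>
           (AE \<theta> in lborel. \<theta> \<in> {0..<1} \<longrightarrow>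
              0 < card (fibre A \<theta>) \<and> card (fibre A \<theta>) < q)))"

text \<open>(m, n) are the data of the jumping number l = m + n p (0-based indices: the
paper's hat-x^i_j is x (i-1) (j-1) and its Phi^i is Phi (sigma (i-1))).\<close>
definition jumping_data ::
  "real \<Rightarrow> (real \<Rightarrow> real \<Rightarrow> real) \<Rightarrow> nat \<Rightarrow> nat \<Rightarrow> (nat \<Rightarrow> (real \<times> real) set) \<Rightarrow> nat \<Rightarrow> nat \<Rightarrow> bool" where
  "jumping_data \<omega> F p q Phi m n \<longleftrightarrow>
     (\<exists>\<sigma> (x :: nat \<Rightarrow> nat \<Rightarrow> real).
        bij_betw \<sigma> {..<p} {..<p} \<and>
        (\<forall>i<p. \<forall>j<q. 0 \<le> x i j \<and> x i j < 1) \<and>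
        (\<forall>i<p. fibre (Phi (\<sigma> i)) 0 = {x i j | j. j < q}) \<and>
        (\<forall>i<p. \<forall>j<q. \<forall>i'<p. \<forall>j'<q. j * p + i < j' * p + i' \<longrightarrow> x i j < x i' j') \<and>
        m < p \<and> n < q \<and>
        (\<exists>\<psi>0 \<psi>1 G. qcurve_lift q (Phi (\<sigma> 0)) \<psi>0 \<and> \<psi>0 0 = x 0 0 \<and>
           qcurve_lift q (Phi (\<sigma> m)) \<psi>1 \<and> \<psi>1 0 = x m n \<and>
           is_T_lift \<omega> F G \<and>
           (\<forall>\<theta>. G (\<theta>, \<psi>0 \<theta>) = (\<theta> + \<omega>, \<psi>1 (\<theta> + \<omega>)))))"

end

theory Submission
  imports Defs
begin


lemma floor_const_nonint:
  fixes g :: "real \<Rightarrow> real"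
  assumes c: "continuous_on UNIV g" and ni: "\<And>t. g t \<notin> \<int>"
  shows "floor (g t) = floor (g 0)"
proof (rule ccontr)
  assume ne: "floor (g t) \<noteq> floor (g 0)"
  have conn: "connected (range g)" using c connected_continuous_image connected_UNIV by blast
  show False
  proof (cases "floor (g t) > floor (g 0)")
    case True
    let ?z = "real_of_int (floor (g 0) + 1)"
    have "g 0 \<le> ?z" by linarith
    moreover have "?z \<le> g t" using True by linarith
    ultimately have "?z \<in> range g" using conn connectedD_interval[of "range g" "g 0" "g t" ?z] by auto
    then show False using ni by (metis Ints_of_int rangeE)
  next
    case False
    with ne have "floor (g t) < floor (g 0)" by linarith
    let ?z = "real_of_int (floor (g 0))"
    have "g t \<le> ?z" using \<open>floor (g t) < floor (g 0)\<close> by linarith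
    moreover have "?z \<le> g 0" by linarith
    ultimately have "?z \<in> range g" using conn connectedD_interval[of "range g" "g t" "g 0" ?z] by auto
    then show False using ni by (metis Ints_of_int rangeE)
  qed
qed

lemma F_int_shift:
  assumes "\<And>x. f (x + 1) = f x + (1::real)"
  shows "f (x + of_int n) = f x + of_int n"
proof (induction n arbitrary: x rule: int_induct[where k=0])
  case base then show ?case by simp
next
  case (step1 i) then show ?case using assms[of "x + of_int i"] by (simp add: add.assoc)
next
  case (step2 i)
  have "f (x + of_int (i - 1)) + 1 = f (x + of_int i)"
    using assms[of "x + of_int (i-1)"] by (simp add: add.assoc)
  then show ?case using step2 by simp
qed

lemma qcurve_int_shift:
  fixes \<psi> :: "real \<Rightarrow> real"
  assumes "\<And>t. \<psi> (t + real q) - \<psi> t = of_int K"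
  shows "\<psi> (v + of_int a * real q) = \<psi> v + of_int a * of_int K"
proof (induction a arbitrary: v rule: int_induct[where k=0])
  case base then show ?case by simp
next
  case (step1 i)
  have "\<psi> (v + of_int (i + 1) * real q) = \<psi> ((v + of_int i * real q) + real q)"
    by (simp add: algebra_simps)
  also have "\<dots> = \<psi> (v + of_int i * real q) + of_int K" using assms[of "v + of_int i * real q"] by linarith
  finally show ?case using step1 by (simp add: algebra_simps)
next
  case (step2 i)
  have "\<psi> (v + of_int i * real q) = \<psi> ((v + of_int (i - 1) * real q) + real q)"
    by (simp add: algebra_simps)
  also have "\<dots> = \<psi> (v + of_int (i-1) * real q) + of_int K" using assms[of "v + of_int (i-1) * real q"] by linarith
  finally show ?case using step2 by (simp add: algebra_simps)
qed

lemma qcurve_nonint: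
  fixes \<psi> :: "real \<Rightarrow> real"
  assumes per: "\<And>t. \<psi> (t + real q) - \<psi> t = of_int K"
    and ni: "\<And>l t. 1 \<le> l \<Longrightarrow> l < q \<Longrightarrow> \<psi> (t + real l) - \<psi> t \<notin> \<int>"
    and nd: "\<not> int q dvd d" and qpos: "q > 0" 
  shows "\<psi> (v + of_int d) - \<psi> v \<notin> \<int>"
proof
  assume A: "\<psi> (v + of_int d) - \<psi> v \<in> \<int>"
  define a where "a = d div int q"
  define l where "l = nat (d mod int q)"
  have dl: "d = a * int q + int l" using qpos by (simp add: a_def l_def)
  have m1: "d mod int q \<noteq> 0" using nd by (simp add: dvd_eq_mod_eq_0)
  have m2: "d mod int q \<ge> 0" using qpos by simp
  have l1: "1 \<le> l" using m1 m2 unfolding l_def by linarith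
  have l2: "l < q" using qpos unfolding l_def by (simp add: nat_less_iff)  
  have e1: "\<psi> (v + of_int a * real q) = \<psi> v + of_int a * of_int K"
    by (rule qcurve_int_shift[of \<psi> q K, OF per])
  have "\<psi> (v + of_int d) = \<psi> ((v + of_int a * real q) + real l)"
    by (simp add: dl algebra_simps)
  then have "\<psi> ((v + of_int a * real q) + real l) - \<psi> (v + of_int a * real q)
      = (\<psi> (v + of_int d) - \<psi> v) - of_int (a * K)" using e1 by simp
  also have "\<dots> \<in> \<int>" by (rule Ints_diff[OF A Ints_of_int])
  finally show False using ni[OF l1 l2] by blast
qed

lemma shift_int:
  fixes g :: "int \<Rightarrow> int"
  assumes sm: "\<And>s t. s < t \<Longrightarrow> g s < g t" and su: "\<And>u. \<exists>s. g s = u"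
  shows "g s = g 0 + s"
proof -
  have step: "g (t + 1) = g t + 1" for t
  proof (rule ccontr)
    assume "g (t + 1) \<noteq> g t + 1"
    moreover have "g t < g (t+1)" using sm by simp
    ultimately have "g t + 1 < g (t + 1)" by simp
    obtain u where u: "g u = g t + 1" using su by blast
    have "t < u" using u sm[of u t] by (cases "u \<le> t") (auto simp: le_less)
    moreover have "u < t + 1" using u sm[of "t+1" u] \<open>g t + 1 < g (t + 1)\<close> by (cases "t + 1 \<le> u") (auto simp: le_less)
    ultimately show False by simp
  qed
  show ?thesis
  proof (induction s rule: int_induct[where k=0])
    case base then show ?case by simp
  next
    case (step1 i) then show ?case using step[of i] by simp
  next
    case (step2 i) then show ?case using step[of "i - 1"] by simp
  qed
qed

lemma frac_eq_iff_Ints: "frac (a::real) = frac b \<longleftrightarrow> a - b \<in> \<int>"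
  by (metis frac_diff_eq frac_diff_zero frac_eq_0_iff)

lemma qcurve_lift_nonint:
  assumes "qcurve_lift q S \<psi>" "q > 0" "\<not> int q dvd d"
  shows "\<psi> (v + of_int d) - \<psi> v \<notin> \<int>"
proof -
  from assms(1) obtain K where K: "\<And>t. \<psi> (t + real q) - \<psi> t = of_int K"
    unfolding qcurve_lift_def by blast
  have ni: "\<And>l t. 1 \<le> l \<Longrightarrow> l < q \<Longrightarrow> \<psi> (t + real l) - \<psi> t \<notin> \<int>"
    using assms(1) unfolding qcurve_lift_def by blast
  show ?thesis by (rule qcurve_nonint[OF K ni assms(3) assms(2)])
qed

lemma qcurve_lift_dvd:
  assumes "qcurve_lift q S \<psi>" "int q dvd d"
  shows "\<psi> (v + of_int d) - \<psi> v \<in> \<int>"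
proof -
  from assms(1) obtain K where K: "\<And>t. \<psi> (t + real q) - \<psi> t = of_int K"
    unfolding qcurve_lift_def by blast
  from assms(2) obtain a where a: "d = int q * a" by (auto elim: dvdE)
  have "\<psi> (v + of_int a * real q) = \<psi> v + of_int a * of_int K"
    by (rule qcurve_int_shift[of \<psi> q K, OF K])
  moreover have "v + of_int d = v + of_int a * real q" by (simp add: a)
  ultimately show ?thesis by simp
qed

lemma qcurve_lift_mem: "qcurve_lift q S \<psi> \<Longrightarrow> (frac t, frac (\<psi> t)) \<in> S"
  unfolding qcurve_lift_def by blast

lemma qcurve_lift_memE: "qcurve_lift q S \<psi> \<Longrightarrow> z \<in> S \<Longrightarrow> \<exists>t. z = (frac t, frac (\<psi> t))"
  unfolding qcurve_lift_def by blast

lemma qcurve_lift_cont: "qcurve_lift q S \<psi> \<Longrightarrow> continuous_on UNIV \<psi>"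
  unfolding qcurve_lift_def by blast

lemma idx_bounds:
  fixes r :: int
  assumes "0 \<le> r" "r < int p * int q" "0 < p"
  shows "nat (r mod int p) < p \<and> nat (r div int p) < q \<and> int (nat (r div int p) * p + nat (r mod int p)) = r"
proof -
  have a: "r mod int p < int p" using assms by simp
  have d0: "r = r div int p * int p + r mod int p" by simp
  have e0: "0 \<le> r mod int p" using assms by simp
  have b: "r div int p < int q"
  proof (rule ccontr)
    assume "\<not> r div int p < int q"
    then have "int q * int p \<le> r div int p * int p" by (intro mult_right_mono) auto
    then show False using assms(2) d0 e0 mult.commute[of "int q" "int p"] by linarith
  qed
  have c: "0 \<le> r div int p" using assms by (simp add: pos_imp_zdiv_nonneg_iff)
  have d: "r = r div int p * int p + r mod int p" by simp
  have e: "0 \<le> r mod int p" using assms by simp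
  have "int (nat (r div int p) * p + nat (r mod int p)) = r div int p * int p + r mod int p"
    using c e by simp
  then show ?thesis using a b c e d by (simp add: nat_less_iff)
qed



theorem mainTheorem3:
  fixes \<omega> :: real and F :: "real \<Rightarrow> real \<Rightarrow> real" and p q m n :: nat
    and Phi :: "nat \<Rightarrow> (real \<times> real) set"
  assumes "0 \<le> \<omega>" and "\<omega> < 1" and "\<omega> \<notin> \<rat>"
    and "T_hom_lift F"
    and "cont_pq_invariant_graph \<omega> F p q Phi"
    and "jumping_data \<omega> F p q Phi m n"
  shows "coprime m p \<and> coprime (m + n * p) p"
proof -
  note FF = assms(4)[unfolded T_hom_lift_def]
  have Fmono: "\<And>\<theta>. strict_mono (F \<theta>)" using FF by blast
  have Fper: "\<And>\<theta> x. F \<theta> (x + 1) = F \<theta> x + 1" using FF by blast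
  have Fint: "\<And>\<theta> x n. F \<theta> (x + of_int n) = F \<theta> x + of_int n"
    using F_int_shift Fper by blast
  have Ffrac: "\<And>\<theta> y. frac (F \<theta> (frac y)) = frac (F \<theta> y)"
  proof -
    fix \<theta> y
    have "F \<theta> y = F \<theta> (frac y + of_int (floor y))" by (simp add: frac_def)
    also have "\<dots> = F \<theta> (frac y) + of_int (floor y)" by (rule Fint)
    finally show "frac (F \<theta> (frac y)) = frac (F \<theta> y)" by simp
  qed
  note GG = assms(5)[unfolded cont_pq_invariant_graph_def]
  have p1: "1 \<le> p" using GG by (rule conjunct1)
  note GG2 = GG[THEN conjunct2]
  have q1: "1 \<le> q" using GG2 by (rule conjunct1)
  note GG3 = GG2[THEN conjunct2]
  have qc: "\<forall>i<p. qcurve q (Phi i)" using GG3 by (rule conjunct1)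
  note GG4 = GG3[THEN conjunct2]
  have disj0: "\<forall>i<p. \<forall>i'<p. i \<noteq> i' \<longrightarrow> Phi i \<inter> Phi i' = {}" using GG4 by (rule conjunct1)
  then have disj: "\<And>i i'. i < p \<Longrightarrow> i' < p \<Longrightarrow> i \<noteq> i' \<Longrightarrow> Phi i \<inter> Phi i' = {}" by blast
  note GG5 = GG4[THEN conjunct2]
  have cardU0: "\<forall>\<theta>\<in>{0..<1}. card (fibre (\<Union>i<p. Phi i) \<theta>) = p * q" using GG5 by (rule conjunct1)
  then have cardU: "\<And>\<theta>. \<theta> \<in> {0..<1} \<Longrightarrow> card (fibre (\<Union>i<p. Phi i) \<theta>) = p * q" by blast
  note GG8 = GG5[THEN conjunct2, THEN conjunct2, THEN conjunct2, THEN conjunct1]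
  obtain \<sigma> where sbij: "bij_betw \<sigma> {..<p} {..<p}"
    and sAE: "\<forall>i<p. AE \<theta> in lborel. \<theta> \<in> {0..<1} \<longrightarrow>
            (\<lambda>x. snd (Tmap \<omega> F (\<theta>, x))) ` fibre (Phi i) \<theta> = fibre (Phi (\<sigma> i)) (frac (\<theta> + \<omega>))"
    and sorb: "\<forall>i<p. {(\<sigma> ^^ k) i | k. k < p} = {..<p}"
    using GG8 by (elim exE conjE)
  obtain \<tau> x \<psi>0 \<psi>1 Gm where tbij: "bij_betw \<tau> {..<p} {..<p}"
    and xb: "\<forall>i<p. \<forall>j<q. 0 \<le> x i j \<and> x i j < 1"
    and xf: "\<forall>i<p. fibre (Phi (\<tau> i)) 0 = {x i j | j. j < q}"
    and xo: "\<forall>i<p. \<forall>j<q. \<forall>i'<p. \<forall>j'<q. j * p + i < j' * p + i' \<longrightarrow> x i j < x i' j'"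
    and mp: "m < p"
    and l0: "qcurve_lift q (Phi (\<tau> 0)) \<psi>0" and l1: "qcurve_lift q (Phi (\<tau> m)) \<psi>1"
    and GT: "is_T_lift \<omega> F Gm" and Geq0: "\<forall>\<theta>. Gm (\<theta>, \<psi>0 \<theta>) = (\<theta> + \<omega>, \<psi>1 (\<theta> + \<omega>))"
    using assms(6) unfolding jumping_data_def by (elim exE conjE) blast
  have Geq: "\<And>\<theta>. Gm (\<theta>, \<psi>0 \<theta>) = (\<theta> + \<omega>, \<psi>1 (\<theta> + \<omega>))" using Geq0 by blast
  have tinj: "\<And>i i'. i<p \<Longrightarrow> i'<p \<Longrightarrow> \<tau> i = \<tau> i' \<Longrightarrow> i = i'"
    using tbij by (auto simp: bij_betw_def inj_on_def)
  have tlt: "\<And>i. i < p \<Longrightarrow> \<tau> i < p" using tbij by (auto simp: bij_betw_def)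
  have slt: "\<And>i. i < p \<Longrightarrow> \<sigma> i < p" using sbij by (auto simp: bij_betw_def)
  have ssurj: "\<And>k. k < p \<Longrightarrow> \<exists>i<p. \<sigma> i = k"
  proof -
    fix k assume "k < p"
    then have "k \<in> \<sigma> ` {..<p}" using sbij by (simp add: bij_betw_def)
    then show "\<exists>i<p. \<sigma> i = k" by auto
  qed
  have disjP: "\<And>i i' z. i<p \<Longrightarrow> i'<p \<Longrightarrow> z \<in> Phi i \<Longrightarrow> z \<in> Phi i' \<Longrightarrow> i = i'"
    using disj by blast
  have disjt: "\<And>i i' z. i<p \<Longrightarrow> i'<p \<Longrightarrow> z \<in> Phi (\<tau> i) \<Longrightarrow> z \<in> Phi (\<tau> i') \<Longrightarrow> i = i'"
    using disjP tinj tlt by metis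
  have fracPhi: "\<And>i a b. i < p \<Longrightarrow> (a, b) \<in> Phi i \<Longrightarrow> frac b = b"
  proof -
    fix i a b assume i: "i < p" and ab: "(a, b) \<in> Phi i"
    obtain \<psi> where "qcurve_lift q (Phi i) \<psi>" using qc i unfolding qcurve_def by blast
    from qcurve_lift_memE[OF this ab] show "frac b = b" by auto
  qed
  have "\<forall>i<p. \<exists>\<psi>. qcurve_lift q (Phi (\<tau> i)) \<psi>" using qc tlt unfolding qcurve_def by blast
  then obtain Psi where Psi: "\<And>i. i<p \<Longrightarrow> qcurve_lift q (Phi (\<tau> i)) (Psi i)" by metis
  have "\<forall>i<p. \<forall>j<q. \<exists>t::int. frac (Psi i (of_int t)) = x i j"
  proof (intro allI impI)
    fix i j assume i: "i<p" and j: "j<q"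
    have "x i j \<in> fibre (Phi (\<tau> i)) 0" using xf i j by blast
    then have "(0, x i j) \<in> Phi (\<tau> i)" by (simp add: fibre_def)
    then obtain t where "(0, x i j) = (frac t, frac (Psi i t))" using qcurve_lift_memE[OF Psi[OF i]] by blast
    then have "t \<in> \<int>" "frac (Psi i t) = x i j" by auto
    then show "\<exists>t::int. frac (Psi i (of_int t)) = x i j" by (metis Ints_cases)
  qed
  then obtain Tt where Tt: "\<And>i j. i<p \<Longrightarrow> j<q \<Longrightarrow> frac (Psi i (of_int (Tt i j))) = x i j" by metis
  define f where "f i j \<theta> = Psi i (\<theta> + of_int (Tt i j)) - Psi i (of_int (Tt i j)) + x i j" for i j \<theta>
  have f0: "\<And>i j. f i j 0 = x i j" by (simp add: f_def)
  have fc: "\<And>i j. i<p \<Longrightarrow> continuous_on UNIV (f i j)"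
  proof -
    fix i j assume i: "i<p"
    have c: "continuous_on UNIV (Psi i)" using qcurve_lift_cont[OF Psi[OF i]] .
    have c2: "continuous_on UNIV (\<lambda>\<theta>::real. \<theta> + of_int (Tt i j))" by (intro continuous_intros)
    have "continuous_on UNIV (\<lambda>\<theta>. Psi i (\<theta> + of_int (Tt i j)))"
      using continuous_on_compose2[OF c c2] by simp
    then have "continuous_on UNIV (\<lambda>\<theta>. Psi i (\<theta> + of_int (Tt i j)) - Psi i (of_int (Tt i j)) + x i j)"
      by (intro continuous_intros)
    moreover have "f i j = (\<lambda>\<theta>. Psi i (\<theta> + of_int (Tt i j)) - Psi i (of_int (Tt i j)) + x i j)"
      by (rule ext) (simp add: f_def)
    ultimately show "continuous_on UNIV (f i j)" by simp
  qed
  have fint: "\<And>i j. i<p \<Longrightarrow> j<q \<Longrightarrow> Psi i (of_int (Tt i j)) - x i j \<in> \<int>"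
  proof -
    fix i j assume i: "i<p" and j: "j<q"
    have "frac (x i j) = x i j" using xb i j by (simp add: frac_eq)
    then have "frac (Psi i (of_int (Tt i j))) = frac (x i j)" using Tt[OF i j] by simp
    then show "Psi i (of_int (Tt i j)) - x i j \<in> \<int>" by (simp add: frac_eq_iff_Ints)
  qed
  have fmem: "\<And>i j \<theta>. i<p \<Longrightarrow> j<q \<Longrightarrow> (frac \<theta>, frac (f i j \<theta>)) \<in> Phi (\<tau> i)"
  proof -
    fix i j \<theta> assume i: "i<p" and j: "j<q"
    have "f i j \<theta> - Psi i (\<theta> + of_int (Tt i j)) = - (Psi i (of_int (Tt i j)) - x i j)"
      by (simp add: f_def)
    also have "\<dots> \<in> \<int>" using fint[OF i j] by (rule Ints_minus)
    finally have "frac (f i j \<theta>) = frac (Psi i (\<theta> + of_int (Tt i j)))" by (simp add: frac_eq_iff_Ints)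
    moreover have "frac \<theta> = frac (\<theta> + of_int (Tt i j))" by simp
    ultimately show "(frac \<theta>, frac (f i j \<theta>)) \<in> Phi (\<tau> i)"
      using qcurve_lift_mem[OF Psi[OF i], of "\<theta> + of_int (Tt i j)"] by simp
  qed
  have fni: "\<And>i j i' j' \<theta>. i<p \<Longrightarrow> j<q \<Longrightarrow> i'<p \<Longrightarrow> j'<q \<Longrightarrow> (i,j) \<noteq> (i',j') \<Longrightarrow> f i j \<theta> - f i' j' \<theta> \<notin> \<int>"
  proof
    fix i j i' j' \<theta> assume i: "i<p" and j: "j<q" and i': "i'<p" and j': "j'<q" and ne: "(i,j) \<noteq> (i',j')"
      and A: "f i j \<theta> - f i' j' \<theta> \<in> \<int>"
    show False
    proof (cases "i = i'")
      case False
      have "frac (f i j \<theta>) = frac (f i' j' \<theta>)" using A by (simp add: frac_eq_iff_Ints)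
      then show False using fmem[OF i j, of \<theta>] fmem[OF i' j', of \<theta>] disjt[OF i i'] False by auto
    next
      case True
      then have jj: "j \<noteq> j'" using ne by simp
      have xne: "x i j \<noteq> x i j'"
      proof (cases "j < j'")
        case True
        then have "j * p + i < j' * p + i" using p1 by simp
        then show ?thesis using xo i j j' by fastforce
      next
        case False
        then have "j' * p + i < j * p + i" using jj p1 by simp
        then show ?thesis using xo i j j' by fastforce
      qed
      let ?d = "Tt i j - Tt i j'"
      have nd: "\<not> int q dvd ?d"
      proof
        assume "int q dvd ?d"
        then have "Psi i (of_int (Tt i j') + of_int ?d) - Psi i (of_int (Tt i j')) \<in> \<int>"
          by (rule qcurve_lift_dvd[OF Psi[OF i]])
        then have "Psi i (of_int (Tt i j)) - Psi i (of_int (Tt i j')) \<in> \<int>" by simp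
        then have "frac (Psi i (of_int (Tt i j))) = frac (Psi i (of_int (Tt i j')))"
          by (simp add: frac_eq_iff_Ints)
        then show False using Tt[OF i j] Tt[OF i j'] xne by simp
      qed
      have "Psi i (\<theta> + of_int (Tt i j') + of_int ?d) - Psi i (\<theta> + of_int (Tt i j')) \<notin> \<int>"
        by (rule qcurve_lift_nonint[OF Psi[OF i] _ nd]) (use q1 in simp)
      moreover have "Psi i (\<theta> + of_int (Tt i j') + of_int ?d) - Psi i (\<theta> + of_int (Tt i j'))
          = (f i j \<theta> - f i' j' \<theta>) + ((Psi i (of_int (Tt i j)) - x i j) - (Psi i (of_int (Tt i j')) - x i j'))"
        using True by (simp add: f_def algebra_simps)
      moreover have "(f i j \<theta> - f i' j' \<theta>) + ((Psi i (of_int (Tt i j)) - x i j) - (Psi i (of_int (Tt i j')) - x i j')) \<in> \<int>"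
        by (rule Ints_add[OF A Ints_diff[OF fint[OF i j] fint[OF i j']]])
      ultimately show False by simp
    qed
  qed
  have ford: "\<And>i j i' j' \<theta>. i<p \<Longrightarrow> j<q \<Longrightarrow> i'<p \<Longrightarrow> j'<q \<Longrightarrow> j*p+i < j'*p+i' \<Longrightarrow>
      f i j \<theta> < f i' j' \<theta> \<and> f i' j' \<theta> < f i j \<theta> + 1"
  proof -
    fix i j i' j' \<theta> assume i: "i<p" and j: "j<q" and i': "i'<p" and j': "j'<q" and lt: "j*p+i < j'*p+i'"
    have ne: "(i',j') \<noteq> (i,j)" using lt by auto
    let ?g = "\<lambda>\<theta>. f i' j' \<theta> - f i j \<theta>"
    have gc: "continuous_on UNIV ?g" using fc i i' by (intro continuous_on_diff) auto
    have gn: "\<And>t. ?g t \<notin> \<int>" using fni[OF i' j' i j ne] by blast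
    have e1: "floor (?g \<theta>) = floor (?g 0)" by (rule floor_const_nonint[OF gc gn])
    have "x i j < x i' j'" using xo i j i' j' lt by blast
    moreover have "0 \<le> x i j" "x i' j' < 1" using xb i j i' j' by auto
    ultimately have "floor (?g 0) = 0" by (simp add: f0 floor_eq_iff)
    with e1 have "floor (?g \<theta>) = 0" by simp
    moreover have "?g \<theta> \<noteq> 0" using gn[of \<theta>] by (metis Ints_0)
    ultimately show "f i j \<theta> < f i' j' \<theta> \<and> f i' j' \<theta> < f i j \<theta> + 1" by (simp add: floor_eq_iff)
  qed
  have f00: "\<And>i j \<theta>. i<p \<Longrightarrow> j<q \<Longrightarrow> f 0 0 \<theta> \<le> f i j \<theta> \<and> f i j \<theta> < f 0 0 \<theta> + 1"
  proof -
    fix i j \<theta> assume i: "i<p" and j: "j<q"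
    show "f 0 0 \<theta> \<le> f i j \<theta> \<and> f i j \<theta> < f 0 0 \<theta> + 1"
    proof (cases "i = 0 \<and> j = 0")
      case True then show ?thesis by simp
    next
      case False
      then have "0*p+0 < j*p+i" using p1 by (cases j) auto
      then show ?thesis using ford[OF _ _ i j, of 0 0 \<theta>] p1 q1 by auto
    qed
  qed
  define P where "P = int p * int q"
  have Ppos: "P > 0" using p1 q1 by (simp add: P_def)
  define h where "h \<theta> s = f (nat ((s mod P) mod int p)) (nat ((s mod P) div int p)) \<theta> + of_int (s div P)" for \<theta> s
  have idx: "\<And>r. 0 \<le> r \<Longrightarrow> r < P \<Longrightarrow> nat (r mod int p) < p \<and> nat (r div int p) < q \<and>
      int (nat (r div int p) * p + nat (r mod int p)) = r"
    using idx_bounds p1 unfolding P_def by simp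
  have hmono: "\<And>\<theta> s t. s < t \<Longrightarrow> h \<theta> s < h \<theta> t"
  proof -
    fix \<theta> and s t :: int assume st: "s < t"
    define r where "r = s mod P"
    define r' where "r' = t mod P"
    define k where "k = s div P"
    define k' where "k' = t div P"
    have s_eq: "s = k * P + r" and t_eq: "t = k' * P + r'" by (simp_all add: r_def r'_def k_def k'_def)
    have rb: "0 \<le> r" "r < P" "0 \<le> r'" "r' < P" using Ppos by (simp_all add: r_def r'_def)
    define i where "i = nat (r mod int p)"
    define j where "j = nat (r div int p)"
    define i' where "i' = nat (r' mod int p)"
    define j' where "j' = nat (r' div int p)"
    have I: "i < p" "j < q" "int (j * p + i) = r" using idx[of r] rb unfolding i_def j_def by auto
    have I': "i' < p" "j' < q" "int (j' * p + i') = r'" using idx[of r'] rb unfolding i'_def j'_def by auto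
    have hs: "h \<theta> s = f i j \<theta> + of_int k" by (simp add: h_def i_def j_def r_def k_def)
    have ht: "h \<theta> t = f i' j' \<theta> + of_int k'" by (simp add: h_def i'_def j'_def r'_def k'_def)
    have kk: "k \<le> k'" unfolding k_def k'_def using st Ppos by (simp add: zdiv_mono1)
    show "h \<theta> s < h \<theta> t"
    proof (cases "k = k'")
      case True
      then have "r < r'" using st s_eq t_eq True by simp
      then have "j * p + i < j' * p + i'" using I(3) I'(3) by linarith
      then have "f i j \<theta> < f i' j' \<theta>" using ford[OF I(1,2) I'(1,2)] by blast
      then show ?thesis using hs ht True by simp
    next
      case False
      then have "k + 1 \<le> k'" using kk by simp
      then have "real_of_int k + 1 \<le> real_of_int k'" by linarith
      moreover have "f i j \<theta> < f 0 0 \<theta> + 1" using f00[OF I(1,2)] by blast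
      moreover have "f 0 0 \<theta> \<le> f i' j' \<theta>" using f00[OF I'(1,2)] by blast
      ultimately show ?thesis using hs ht by linarith
    qed
  qed
  have hle: "\<And>\<theta> s t. s \<le> t \<Longrightarrow> h \<theta> s \<le> h \<theta> t" using hmono by (metis le_less)
  have hinj: "\<And>\<theta> s t. h \<theta> s = h \<theta> t \<Longrightarrow> s = t" using hmono by (metis linorder_neqE less_irrefl)
  have hmem: "\<And>\<theta> s. (frac \<theta>, frac (h \<theta> s)) \<in> Phi (\<tau> (nat (s mod int p)))"
  proof -
    fix \<theta> and s :: int
    have rb: "0 \<le> s mod P" "s mod P < P" using Ppos by simp_all
    have I: "nat ((s mod P) mod int p) < p" "nat ((s mod P) div int p) < q" using idx[OF rb] by auto
    have "(s mod P) mod int p = s mod int p" unfolding P_def by (simp add: mod_mod_cancel)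
    moreover have "frac (h \<theta> s) = frac (f (nat ((s mod P) mod int p)) (nat ((s mod P) div int p)) \<theta>)"
      by (simp add: h_def)
    ultimately show "(frac \<theta>, frac (h \<theta> s)) \<in> Phi (\<tau> (nat (s mod int p)))" using fmem[OF I] by simp
  qed
  have hsurj: "\<And>\<theta> y i0. \<theta> \<in> {0..<1} \<Longrightarrow> i0 < p \<Longrightarrow> (\<theta>, frac y) \<in> Phi i0 \<Longrightarrow> \<exists>s. h \<theta> s = y"
  proof -
    fix \<theta> y i0 assume th: "\<theta> \<in> {0..<1}" and i0: "i0 < p" and mem: "(\<theta>, frac y) \<in> Phi i0"
    have fth: "frac \<theta> = \<theta>" using th by simp
    define U where "U = fibre (\<Union>i<p. Phi i) \<theta>"
    define Q where "Q = (\<lambda>(i,j). frac (f i j \<theta>)) ` ({..<p} \<times> {..<q})"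
    have QU: "Q \<subseteq> U"
    proof
      fix z assume "z \<in> Q"
      then obtain i j where ij: "i < p" "j < q" "z = frac (f i j \<theta>)" unfolding Q_def by auto
      have "(\<theta>, z) \<in> Phi (\<tau> i)" using fmem[OF ij(1,2), of \<theta>] fth ij(3) by simp
      then show "z \<in> U" unfolding U_def fibre_def using tlt[OF ij(1)] by blast
    qed
    have cU: "card U = p * q" using cardU th U_def by simp
    have fU: "finite U" using cU p1 q1 by (metis card.infinite mult_is_0 not_one_le_zero)
    have injQ: "inj_on (\<lambda>(i,j). frac (f i j \<theta>)) ({..<p} \<times> {..<q})"
    proof (rule inj_onI)
      fix a b assume a: "a \<in> {..<p} \<times> {..<q}" and b: "b \<in> {..<p} \<times> {..<q}"
        and e: "(\<lambda>(i,j). frac (f i j \<theta>)) a = (\<lambda>(i,j). frac (f i j \<theta>)) b"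
      obtain i j where aa: "a = (i,j)" by (cases a)
      obtain i' j' where bb: "b = (i',j')" by (cases b)
      have "f i j \<theta> - f i' j' \<theta> \<in> \<int>" using e aa bb by (simp add: frac_eq_iff_Ints)
      then show "a = b" using fni[of i j i' j' \<theta>] a b aa bb by auto
    qed
    have cQ: "card Q = p * q" unfolding Q_def by (simp add: card_image[OF injQ] card_cartesian_product)
    have QeU: "Q = U" using card_subset_eq[OF fU QU] cQ cU by simp
    have "frac y \<in> U" using mem i0 unfolding U_def fibre_def by blast
    then obtain i j where ij: "i<p" "j<q" "frac y = frac (f i j \<theta>)" using QeU unfolding Q_def by auto
    then obtain k where yk: "y = f i j \<theta> + of_int k" using frac_eqE by metis
    define s where "s = k * P + int (j*p+i)"
    have jp: "j * p + i < p * q"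
    proof -
      have "(j + 1) * p \<le> q * p" using ij(2) by (intro mult_le_mono1) simp
      then show ?thesis using ij(1) by (simp add: algebra_simps)
    qed
    have b1: "0 \<le> int (j*p+i)" "int (j*p+i) < P"
    proof -
      show "0 \<le> int (j*p+i)" by simp
      have "int (j*p+i) < int (p*q)" using jp by (simp only: of_nat_less_iff)
      then show "int (j*p+i) < P" unfolding P_def by simp
    qed
    have sd: "s div P = k" unfolding s_def using b1 Ppos by simp
    have sm: "s mod P = int (j*p+i)" unfolding s_def using b1 Ppos by simp
    have m1: "int (j*p+i) mod int p = int i" using ij(1) by (simp add: of_nat_mod[symmetric])
    have m2: "int (j*p+i) div int p = int j" using ij(1) by (simp add: of_nat_div[symmetric])
    have "h \<theta> s = f i j \<theta> + of_int k" unfolding h_def using sd sm m1 m2 by simp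
    then show "\<exists>s. h \<theta> s = y" using yk by blast
  qed
  have "AE \<theta> in lborel. \<forall>i\<in>{..<p}. \<theta> \<in> {0..<1} \<longrightarrow>
      (\<lambda>x. snd (Tmap \<omega> F (\<theta>, x))) ` fibre (Phi i) \<theta> = fibre (Phi (\<sigma> i)) (frac (\<theta> + \<omega>))"
    by (rule eventually_ball_finite) (use sAE in auto)
  then have AEall: "AE \<theta> in lborel. \<theta> \<in> {0..<1} \<longrightarrow> (\<forall>i<p.
      (\<lambda>x. snd (Tmap \<omega> F (\<theta>, x))) ` fibre (Phi i) \<theta> = fibre (Phi (\<sigma> i)) (frac (\<theta> + \<omega>)))"
    by (rule eventually_mono) auto
  obtain th where th: "th \<in> {0..<1}" and thP0: "\<forall>i<p.
      (\<lambda>x. snd (Tmap \<omega> F (th, x))) ` fibre (Phi i) th = fibre (Phi (\<sigma> i)) (frac (th + \<omega>))"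
  proof -
    from AEall obtain N where N: "{x \<in> space lborel. \<not> (x \<in> {0..<1} \<longrightarrow> (\<forall>i<p.
      (\<lambda>xa. snd (Tmap \<omega> F (x, xa))) ` fibre (Phi i) x = fibre (Phi (\<sigma> i)) (frac (x + \<omega>))))} \<subseteq> N"
      and N0: "emeasure lborel N = 0" and Ns: "N \<in> sets lborel" by (rule AE_E)
    show ?thesis
    proof (rule ccontr)
      assume nex: "\<not> thesis"
      have "{0..<1::real} \<subseteq> N"
      proof
        fix t :: real assume t: "t \<in> {0..<1}"
        have "\<not> (\<forall>i<p. (\<lambda>xa. snd (Tmap \<omega> F (t, xa))) ` fibre (Phi i) t = fibre (Phi (\<sigma> i)) (frac (t + \<omega>)))"
          using that t nex by blast
        then show "t \<in> N" using N t by auto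
      qed
      then have "emeasure lborel {0..<1::real} \<le> emeasure lborel N" by (rule emeasure_mono[OF _ Ns])
      then show False using N0 by simp
    qed
  qed
  have fth: "frac th = th" using th by simp
  define th' where "th' = frac (th + \<omega>)"
  have th': "th' \<in> {0..<1}" unfolding th'_def by (simp add: frac_lt_1)
  have fth': "frac th' = th'" using th' by simp
  have thP: "\<And>i. i<p \<Longrightarrow> (\<lambda>z. frac (F th z)) ` fibre (Phi i) th = fibre (Phi (\<sigma> i)) th'"
    using thP0 fth unfolding th'_def by (simp add: Tmap_def)
  have img: "\<And>i z. i<p \<Longrightarrow> (th, z) \<in> Phi i \<Longrightarrow> (th', frac (F th z)) \<in> Phi (\<sigma> i)"
  proof -
    fix i z assume i: "i<p" and z: "(th, z) \<in> Phi i"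
    have "frac (F th z) \<in> (\<lambda>z. frac (F th z)) ` fibre (Phi i) th" using z by (simp add: fibre_def)
    then show "(th', frac (F th z)) \<in> Phi (\<sigma> i)" using thP[OF i] by (simp add: fibre_def)
  qed
  have pre: "\<And>i w. i<p \<Longrightarrow> (th', w) \<in> Phi (\<sigma> i) \<Longrightarrow> \<exists>z. (th, z) \<in> Phi i \<and> frac (F th z) = w"
  proof -
    fix i w assume i: "i<p" and w: "(th', w) \<in> Phi (\<sigma> i)"
    have "w \<in> (\<lambda>z. frac (F th z)) ` fibre (Phi i) th" using thP[OF i] w by (simp add: fibre_def)
    then show "\<exists>z. (th, z) \<in> Phi i \<and> frac (F th z) = w" by (auto simp: fibre_def)
  qed
  have modlt: "\<And>s::int. nat (s mod int p) < p" using p1 by (simp add: nat_less_iff)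
  have "\<forall>s. \<exists>s'. h th' s' = F th (h th s)"
  proof
    fix s :: int
    have "(th, frac (h th s)) \<in> Phi (\<tau> (nat (s mod int p)))" using hmem[of th s] fth by simp
    then have "(th', frac (F th (frac (h th s)))) \<in> Phi (\<sigma> (\<tau> (nat (s mod int p))))"
      using img tlt modlt by blast
    then have "(th', frac (F th (h th s))) \<in> Phi (\<sigma> (\<tau> (nat (s mod int p))))" using Ffrac by simp
    then show "\<exists>s'. h th' s' = F th (h th s)" using hsurj[OF th'] slt tlt modlt by blast
  qed
  then obtain g where g: "\<And>s. h th' (g s) = F th (h th s)" by metis
  have gmono: "\<And>s t. s < t \<Longrightarrow> g s < g t"
  proof -
    fix s t :: int assume "s < t"
    then have "F th (h th s) < F th (h th t)" using hmono Fmono by (simp add: strict_mono_less)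
    then have "h th' (g s) < h th' (g t)" using g by simp
    then show "g s < g t" using hle[of "g t" "g s" th'] by (meson not_less)
  qed
  have gsurj: "\<And>u. \<exists>s. g s = u"
  proof -
    fix u :: int
    have mem: "(th', frac (h th' u)) \<in> Phi (\<tau> (nat (u mod int p)))" using hmem[of th' u] fth' by simp
    obtain i0 where i0: "i0<p" "\<sigma> i0 = \<tau> (nat (u mod int p))" using ssurj tlt modlt by blast
    then obtain z where z: "(th, z) \<in> Phi i0" "frac (F th z) = frac (h th' u)" using pre mem by metis
    have zf: "frac z = z" using fracPhi[OF i0(1) z(1)] .
    define z' where "z' = z + of_int (floor (h th' u) - floor (F th z))"
    have "F th z' = F th z + of_int (floor (h th' u) - floor (F th z))" unfolding z'_def by (rule Fint)
    also have "\<dots> = h th' u" using z(2) unfolding frac_def by simp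
    finally have Fz': "F th z' = h th' u" .
    have "frac z' = z" unfolding z'_def frac_add_of_int_right zf ..
    then have "(th, frac z') \<in> Phi i0" using z(1) by simp
    then obtain s where "h th s = z'" using hsurj[OF th i0(1)] by blast
    then have "h th' (g s) = h th' u" using g Fz' by simp
    then have "g s = u" by (rule hinj)
    then show "\<exists>s. g s = u" by blast
  qed
  have gsh: "\<And>s. g s = g 0 + s" by (rule shift_int[OF gmono gsurj])
  have lab: "\<And>i. i<p \<Longrightarrow> \<sigma> (\<tau> i) = \<tau> (nat ((g 0 + int i) mod int p))"
  proof -
    fix i assume i: "i<p"
    have ni: "nat (int i mod int p) = i" using i by simp
    have "(th, frac (h th (int i))) \<in> Phi (\<tau> i)" using hmem[of th "int i"] fth ni by simp
    then have "(th', frac (F th (frac (h th (int i))))) \<in> Phi (\<sigma> (\<tau> i))" using img tlt i by blast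
    then have a: "(th', frac (h th' (g (int i)))) \<in> Phi (\<sigma> (\<tau> i))" using Ffrac g by simp
    have b: "(th', frac (h th' (g (int i)))) \<in> Phi (\<tau> (nat (g (int i) mod int p)))" using hmem[of th' "g (int i)"] fth' by simp
    have "\<sigma> (\<tau> i) = \<tau> (nat (g (int i) mod int p))" using disjP[OF slt[OF tlt[OF i]] tlt[OF modlt] a b] .
    then show "\<sigma> (\<tau> i) = \<tau> (nat ((g 0 + int i) mod int p))" using gsh[of "int i"] by simp
  qed
  have sm: "\<sigma> (\<tau> 0) = \<tau> m"
  proof -
    have a: "(th, frac (\<psi>0 th)) \<in> Phi (\<tau> 0)" using qcurve_lift_mem[OF l0, of th] fth by simp
    have b: "(th', frac (F th (frac (\<psi>0 th)))) \<in> Phi (\<sigma> (\<tau> 0))" using img[OF tlt a] p1 by simp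
    have "tproj (Gm (th, \<psi>0 th)) = Tmap \<omega> F (tproj (th, \<psi>0 th))" using GT unfolding is_T_lift_def by blast
    then have "frac (\<psi>1 (th + \<omega>)) = frac (F th (frac (\<psi>0 th)))" using Geq[of th] fth by (simp add: tproj_def Tmap_def)
    moreover have "(frac (th + \<omega>), frac (\<psi>1 (th + \<omega>))) \<in> Phi (\<tau> m)" using qcurve_lift_mem[OF l1] .
    ultimately have c: "(th', frac (F th (frac (\<psi>0 th)))) \<in> Phi (\<tau> m)" unfolding th'_def by simp
    show ?thesis using disjP[OF slt[OF tlt] tlt[OF mp] b c] p1 by simp
  qed
  have mg: "m = nat (g 0 mod int p)"
  proof -
    have "\<tau> m = \<tau> (nat (g 0 mod int p))" using sm lab[of 0] p1 by simp
    then show ?thesis using tinj[OF mp modlt] by simp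
  qed
  have lab2: "\<And>i. i<p \<Longrightarrow> \<sigma> (\<tau> i) = \<tau> ((m + i) mod p)"
  proof -
    fix i assume i: "i<p"
    have "(g 0 + int i) mod int p = (g 0 mod int p + int i) mod int p" by (simp add: mod_add_left_eq)
    also have "g 0 mod int p = int m" using mg p1 by simp
    finally have "(g 0 + int i) mod int p = int ((m + i) mod p)" by (simp add: of_nat_mod)
    then show "\<sigma> (\<tau> i) = \<tau> ((m + i) mod p)" using lab[OF i] by simp
  qed
  have orb: "\<And>k. (\<sigma> ^^ k) (\<tau> 0) = \<tau> ((k * m) mod p)"
  proof -
    fix k show "(\<sigma> ^^ k) (\<tau> 0) = \<tau> ((k * m) mod p)"
    proof (induction k)
      case 0 then show ?case by simp
    next
      case (Suc k)
      have "(\<sigma> ^^ Suc k) (\<tau> 0) = \<sigma> (\<tau> ((k * m) mod p))" using Suc by simp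
      also have "\<dots> = \<tau> ((m + (k * m) mod p) mod p)" using lab2 p1 by simp
      also have "(m + (k * m) mod p) mod p = (Suc k * m) mod p" by (simp add: mod_add_right_eq)
      finally show ?case .
    qed
  qed
  have cop: "coprime m p"
  proof (cases "p = 1")
    case True then show ?thesis by simp
  next
    case False
    then have p2: "1 < p" using p1 by simp
    have "\<tau> 1 \<in> {..<p}" using tlt p2 by simp
    then have "\<tau> 1 \<in> {(\<sigma> ^^ k) (\<tau> 0) | k. k < p}" using sorb tlt p1 by auto
    then obtain k where "\<tau> 1 = \<tau> ((k * m) mod p)" using orb by auto
    then have km: "(k * m) mod p = 1" using tinj[OF p2, of "(k*m) mod p"] p1 by simp
    show ?thesis
    proof (rule coprimeI)
      fix c assume "c dvd m" "c dvd p"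
      then have "c dvd (k * m) mod p" by (simp add: dvd_mod)
      then show "is_unit c" using km by simp
    qed
  qed
  have "(m + n * p) mod p = m mod p" by simp
  then have "coprime (m + n * p) p" using cop p1
    by (metis coprime_mod_left_iff not_one_le_zero)
  then show ?thesis using cop by simp
qed

end
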